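(* Let $X$ be a space with a map $T:X\to X$ and a (not necessarily invariant) reference probability measure $\mu$, and let $\alpha=\{A_1,\dots,A_r\}$ be a finite measurable partition of $X$. For every recursive reversible compression algorithm $Z$ on the alphabet $\{1,\dots,r\}$, $q_Z(X,T,\alpha)\ge q_{AIC}(X,T,\alpha)$.
   Context: $\varphi_\alpha(x)=\omega\in\{1,\dots,r\}^{\mathbb{N}}$ is defined by $T^j(x)\in A_{\omega_j}$ for all $j$; $\Omega_\alpha=\varphi_\alpha(X)$ and $\mu_\alpha$ is the measure on $\Omega_\alpha$ defined on cylinders by $\mu_\alpha(\{\bar\omega:\bar\omega_i=\omega_i, k\le i\le n-1\})=\mu(\bigcap_{i=k}^{n-1}T^{-i}A_{\omega_i})$. A recursive reversible compression algorithm is an injective recursive map $Z$ from finite strings to binary strings, $I_Z(s)=|Z(s)|$; $AIC(s)=\min\{|P|:C(P)=s\}$ for a fixed universal computing machine $C$. For $I\in\{AIC,I_Z\}$, $I(x,\alpha,n)=I(\omega^n)$ with $\omega=\varphi_\alpha(x)$ and $\omega^n$ its first $n$ symbols, and the $q$-entropy relative to $\alpha$ is $h^q(X,\alpha)=\limsup_{n\to\infty}\int_{\Omega_\alpha}\frac{I(\omega^n)}{n^q}\,d\mu_\alpha(\omega)$. The intermittent chaos index is $q(X,T,\alpha)=\inf\{p>0:h^p(X,\alpha)=0\}$; $q_{AIC}$, $q_Z$ are this index for $I=AIC$, $I=I_Z$. *)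

theory Defs
  imports "HOL-Probability.Probability" "HOL-Library.Nat_Bijection"
begin

datatype recf = Zero | Succ | Proj nat | Comp recf "recf list" | PrimRec recf recf | Mu recf

inductive rec_eval :: "recf \<Rightarrow> nat list \<Rightarrow> nat \<Rightarrow> bool" where
  zero: "rec_eval Zero xs 0"
| succ: "rec_eval Succ (x # xs) (Suc x)"
| proj: "i < length xs \<Longrightarrow> rec_eval (Proj i) xs (xs ! i)"
| comp: "length ys = length gs \<Longrightarrow> (\<forall>i<length gs. rec_eval (gs ! i) xs (ys ! i))
           \<Longrightarrow> rec_eval f ys z \<Longrightarrow> rec_eval (Comp f gs) xs z"
| pr0: "rec_eval f xs y \<Longrightarrow> rec_eval (PrimRec f g) (0 # xs) y"
| prS: "rec_eval (PrimRec f g) (n # xs) y \<Longrightarrow> rec_eval g (n # y # xs) z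
           \<Longrightarrow> rec_eval (PrimRec f g) (Suc n # xs) z"
| mu: "rec_eval f (y # xs) 0 \<Longrightarrow> (\<forall>i<y. \<exists>v. rec_eval f (i # xs) v \<and> 0 < v)
           \<Longrightarrow> rec_eval (Mu f) xs y"

definition str_code :: "nat list \<Rightarrow> nat" where
  "str_code s = list_encode s"

definition bin_code :: "bool list \<Rightarrow> nat" where
  "bin_code P = list_encode (map of_bool P)"

definition partial_recursive_machine :: "(bool list \<Rightarrow> nat list option) \<Rightarrow> bool" where
  "partial_recursive_machine D \<longleftrightarrow>
     (\<exists>e. \<forall>P y. rec_eval e [bin_code P] y \<longleftrightarrow> (\<exists>s. D P = Some s \<and> y = str_code s))"

definition universal_machine :: "(bool list \<Rightarrow> nat list option) \<Rightarrow> bool" where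
  "universal_machine C \<longleftrightarrow> partial_recursive_machine C \<and>
     (\<forall>D. partial_recursive_machine D \<longrightarrow> (\<exists>p. \<forall>P. C (p @ P) = D P))"

definition AIC :: "(bool list \<Rightarrow> nat list option) \<Rightarrow> nat list \<Rightarrow> nat" where
  "AIC C s = (LEAST n. \<exists>P. C P = Some s \<and> length P = n)"

definition recursive_reversible_compression :: "nat \<Rightarrow> (nat list \<Rightarrow> bool list) \<Rightarrow> bool" where
  "recursive_reversible_compression r Z \<longleftrightarrow>
     inj_on Z (lists {1..r}) \<and>
     (\<exists>e. \<forall>s\<in>lists {1..r}. \<forall>y. rec_eval e [str_code s] y \<longleftrightarrow> y = bin_code (Z s))"

definition I_Z :: "(nat list \<Rightarrow> bool list) \<Rightarrow> nat list \<Rightarrow> nat" where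
  "I_Z Z s = length (Z s)"

definition symb :: "nat \<Rightarrow> ('a \<Rightarrow> 'a) \<Rightarrow> (nat \<Rightarrow> 'a set) \<Rightarrow> 'a \<Rightarrow> nat \<Rightarrow> nat" where
  "symb r T A x = (\<lambda>j. THE i. i \<in> {1..r} \<and> (T ^^ j) x \<in> A i)"

definition prefix_str :: "(nat \<Rightarrow> nat) \<Rightarrow> nat \<Rightarrow> nat list" where
  "prefix_str \<omega> n = map \<omega> [0..<n]"

text \<open>Sequence space with the product (cylinder) sigma-algebra; mu_alpha is the image of mu
  under phi_alpha, which is the measure determined by the cylinder formula.\<close>

definition seq_space :: "(nat \<Rightarrow> nat) measure" where
  "seq_space = Pi\<^sub>M UNIV (\<lambda>_. count_space UNIV)"

definition mu_alpha :: "'a measure \<Rightarrow> nat \<Rightarrow> ('a \<Rightarrow> 'a) \<Rightarrow> (nat \<Rightarrow> 'a set) \<Rightarrow> (nat \<Rightarrow> nat) measure" where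
  "mu_alpha M r T A = distr M seq_space (symb r T A)"

definition q_entropy :: "'a measure \<Rightarrow> nat \<Rightarrow> ('a \<Rightarrow> 'a) \<Rightarrow> (nat \<Rightarrow> 'a set)
    \<Rightarrow> (nat list \<Rightarrow> nat) \<Rightarrow> real \<Rightarrow> ennreal" where
  "q_entropy M r T A I q =
     limsup (\<lambda>n. \<integral>\<^sup>+ \<omega>. ennreal (real (I (prefix_str \<omega> n)) / real n powr q) \<partial>(mu_alpha M r T A))"

definition chaos_index :: "'a measure \<Rightarrow> nat \<Rightarrow> ('a \<Rightarrow> 'a) \<Rightarrow> (nat \<Rightarrow> 'a set)
    \<Rightarrow> (nat list \<Rightarrow> nat) \<Rightarrow> ereal" where
  "chaos_index M r T A I = Inf (ereal ` {p. p > 0 \<and> q_entropy M r T A I p = 0})"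

end

theory Submission
  imports Defs
begin


lemma re_Zero[simp]: "rec_eval Zero xs y \<longleftrightarrow> y = 0"
  by (auto elim: rec_eval.cases intro: rec_eval.intros)

lemma re_Succ[simp]: "rec_eval Succ xs y \<longleftrightarrow> xs \<noteq> [] \<and> y = Suc (hd xs)"
  by (cases xs) (auto elim: rec_eval.cases intro: rec_eval.intros)

lemma re_Proj[simp]: "rec_eval (Proj i) xs y \<longleftrightarrow> i < length xs \<and> y = xs ! i"
  by (auto elim: rec_eval.cases intro: rec_eval.intros)

lemma re_Comp: "rec_eval (Comp f gs) xs z \<longleftrightarrow>
   (\<exists>ys. length ys = length gs \<and> (\<forall>i<length gs. rec_eval (gs ! i) xs (ys ! i)) \<and> rec_eval f ys z)"
  by (auto elim: rec_eval.cases intro: rec_eval.intros)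

lemma re_PR0[simp]: "rec_eval (PrimRec f g) (0 # xs) y \<longleftrightarrow> rec_eval f xs y"
  by (auto elim: rec_eval.cases intro: rec_eval.intros)

lemma re_PRS[simp]: "rec_eval (PrimRec f g) (Suc n # xs) z \<longleftrightarrow>
   (\<exists>y. rec_eval (PrimRec f g) (n # xs) y \<and> rec_eval g (n # y # xs) z)"
  by (auto elim: rec_eval.cases intro: rec_eval.intros)

lemma re_Mu: "rec_eval (Mu f) xs y \<longleftrightarrow>
   rec_eval f (y # xs) 0 \<and> (\<forall>i<y. \<exists>v. rec_eval f (i # xs) v \<and> 0 < v)"
  by (auto elim: rec_eval.cases intro: rec_eval.intros)

definition rep :: "nat \<Rightarrow> recf \<Rightarrow> (nat list \<Rightarrow> nat) \<Rightarrow> bool" where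
  "rep n f F \<longleftrightarrow> (\<forall>xs y. length xs = n \<longrightarrow> (rec_eval f xs y \<longleftrightarrow> y = F xs))"

lemma repD: "rep n f F \<Longrightarrow> length xs = n \<Longrightarrow> rec_eval f xs y \<longleftrightarrow> y = F xs"
  unfolding rep_def by blast

lemma rep_Zero: "rep n Zero (\<lambda>_. 0)" by (simp add: rep_def)

lemma rep_Proj: "i < n \<Longrightarrow> rep n (Proj i) (\<lambda>xs. xs ! i)" by (auto simp add: rep_def)

lemma rep_Succ: "rep 1 Succ (\<lambda>xs. Suc (xs ! 0))"
  by (auto simp add: rep_def length_Suc_conv)

lemma rep_Comp:
  assumes "rep (length gs) f F" "length Gs = length gs"
    "\<And>i. i < length gs \<Longrightarrow> rep n (gs ! i) (Gs ! i)"
    "\<And>xs. length xs = n \<Longrightarrow> H xs = F (map (\<lambda>G. G xs) Gs)"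
  shows "rep n (Comp f gs) H"
  unfolding rep_def
proof (intro allI impI)
  fix xs :: "nat list" and y assume l: "length xs = n"
  have *: "(length ys = length gs \<and> (\<forall>i<length gs. rec_eval (gs ! i) xs (ys ! i))) \<longleftrightarrow>
     ys = map (\<lambda>G. G xs) Gs" for ys
  proof -
    have r: "\<And>i y. i < length gs \<Longrightarrow> rec_eval (gs!i) xs y \<longleftrightarrow> y = (Gs!i) xs"
      using assms(3) l repD by blast
    show ?thesis using assms(2) by (auto simp: r intro!: nth_equalityI)
  qed
  show "rec_eval (Comp f gs) xs y = (y = H xs)"
  proof -
    have "rec_eval (Comp f gs) xs y \<longleftrightarrow> rec_eval f (map (\<lambda>G. G xs) Gs) y"
      unfolding re_Comp using * by metis
    also have "\<dots> \<longleftrightarrow> y = F (map (\<lambda>G. G xs) Gs)"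
      using repD[OF assms(1)] assms(2) by simp
    finally show ?thesis using assms(4) l by simp
  qed
qed

lemma rep_PrimRec:
  assumes "rep n f F" "rep (Suc (Suc n)) g G"
  shows "rep (Suc n) (PrimRec f g) (\<lambda>xs. rec_nat (F (tl xs)) (\<lambda>k y. G (k # y # tl xs)) (hd xs))"
  unfolding rep_def
proof (intro allI impI)
  fix xs :: "nat list" and y assume "length xs = Suc n"
  then obtain k ys where xs: "xs = k # ys" and l: "length ys = n" by (cases xs) auto
  have "rec_eval (PrimRec f g) (k # ys) y \<longleftrightarrow> y = rec_nat (F ys) (\<lambda>k y. G (k # y # ys)) k" for y
    by (induction k arbitrary: y) (auto simp: repD[OF assms(1) l] repD[OF assms(2)] l)
  then show "rec_eval (PrimRec f g) xs y = (y = rec_nat (F (tl xs)) (\<lambda>k y. G (k # y # tl xs)) (hd xs))"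
    by (simp add: xs)
qed

lemma rep_Mu_iff:
  assumes "rep (Suc n) f F" "length xs = n"
  shows "rec_eval (Mu f) xs y \<longleftrightarrow> F (y # xs) = 0 \<and> (\<forall>i<y. F (i # xs) \<noteq> 0)"
  using assms by (auto simp: re_Mu repD)

lemma rep_Mu:
  assumes "rep (Suc n) f F" "\<And>xs. length xs = n \<Longrightarrow> \<exists>y. F (y # xs) = 0"
  shows "rep n (Mu f) (\<lambda>xs. LEAST y. F (y # xs) = 0)"
  unfolding rep_def
proof (intro allI impI)
  fix xs :: "nat list" and y assume l: "length xs = n"
  show "rec_eval (Mu f) xs y = (y = (LEAST y. F (y # xs) = 0))"
    unfolding rep_Mu_iff[OF assms(1) l]
    using assms(2)[OF l]
    by (metis (mono_tags, lifting) LeastI_ex Least_le not_less_Least le_neq_implies_less)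
qed




lemma rep_cong: "rep n f F \<Longrightarrow> (\<And>xs. length xs = n \<Longrightarrow> F xs = G xs) \<Longrightarrow> rep n f G"
  by (simp add: rep_def)

lemma rep_Succ': "0 < n \<Longrightarrow> rep n Succ (\<lambda>xs. Suc (xs ! 0))"
  by (auto simp add: rep_def hd_conv_nth)

lemma rep_C0: "rep 0 f F \<Longrightarrow> rep n (Comp f []) (\<lambda>xs. F [])"
  by (rule rep_Comp[where Gs="[]" and F=F]) auto

lemma rep_C1: "rep 1 f F \<Longrightarrow> rep n g G \<Longrightarrow> rep n (Comp f [g]) (\<lambda>xs. F [G xs])"
  by (rule rep_Comp[where Gs="[G]"]) auto

lemma rep_C2: "rep 2 f F \<Longrightarrow> rep n g1 G1 \<Longrightarrow> rep n g2 G2 \<Longrightarrow>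
   rep n (Comp f [g1, g2]) (\<lambda>xs. F [G1 xs, G2 xs])"
  by (rule rep_Comp[where Gs="[G1, G2]"]) (auto simp: less_Suc_eq nth_Cons' numeral_2_eq_2 numeral_3_eq_3)

lemma rep_C3: "rep 3 f F \<Longrightarrow> rep n g1 G1 \<Longrightarrow> rep n g2 G2 \<Longrightarrow> rep n g3 G3 \<Longrightarrow>
   rep n (Comp f [g1, g2, g3]) (\<lambda>xs. F [G1 xs, G2 xs, G3 xs])"
  by (rule rep_Comp[where Gs="[G1, G2, G3]"]) (auto simp: less_Suc_eq nth_Cons' numeral_2_eq_2 numeral_3_eq_3)

lemma len1: "length xs = Suc 0 \<longleftrightarrow> (\<exists>a. xs = [a])"
  by (auto simp: length_Suc_conv)
lemma len2: "length xs = 2 \<longleftrightarrow> (\<exists>a b. xs = [a, b])"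
  by (auto simp: length_Suc_conv numeral_2_eq_2)
lemma len3: "length xs = 3 \<longleftrightarrow> (\<exists>a b c. xs = [a, b, c])"
  by (auto simp: length_Suc_conv numeral_3_eq_3)

lemma rep_PR0: assumes "rep 0 f F" "rep 2 g G" shows
   "rep 1 (PrimRec f g) (\<lambda>xs. rec_nat (F []) (\<lambda>k y. G [k, y]) (xs ! 0))"
proof -
  have "rep (Suc 0) (PrimRec f g) (\<lambda>xs. rec_nat (F (tl xs)) (\<lambda>k y. G (k # y # tl xs)) (hd xs))"
    by (rule rep_PrimRec) (use assms in \<open>simp_all add: numeral_2_eq_2\<close>)
  then have "rep 1 (PrimRec f g) (\<lambda>xs. rec_nat (F (tl xs)) (\<lambda>k y. G (k # y # tl xs)) (hd xs))" by (simp add: numeral_2_eq_2 numeral_3_eq_3)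
  then show ?thesis by (rule rep_cong) (auto simp: len1)
qed

lemma rep_PR1: assumes "rep 1 f F" "rep 3 g G" shows
   "rep 2 (PrimRec f g) (\<lambda>xs. rec_nat (F [xs ! 1]) (\<lambda>k y. G [k, y, xs ! 1]) (xs ! 0))"
proof -
  have "rep (Suc 1) (PrimRec f g) (\<lambda>xs. rec_nat (F (tl xs)) (\<lambda>k y. G (k # y # tl xs)) (hd xs))"
    by (rule rep_PrimRec) (use assms in \<open>simp_all add: numeral_3_eq_3\<close>)
  then have "rep 2 (PrimRec f g) (\<lambda>xs. rec_nat (F (tl xs)) (\<lambda>k y. G (k # y # tl xs)) (hd xs))" by (simp add: numeral_2_eq_2 numeral_3_eq_3)
  then show ?thesis by (rule rep_cong) (auto simp: len2)
qed

lemma rep_PR2: assumes "rep 2 f F" "rep 4 g G" shows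
   "rep 3 (PrimRec f g) (\<lambda>xs. rec_nat (F [xs ! 1, xs ! 2]) (\<lambda>k y. G [k, y, xs ! 1, xs ! 2]) (xs ! 0))"
proof -
  have "rep (Suc 2) (PrimRec f g) (\<lambda>xs. rec_nat (F (tl xs)) (\<lambda>k y. G (k # y # tl xs)) (hd xs))"
    by (rule rep_PrimRec) (use assms in \<open>simp_all add: eval_nat_numeral\<close>)
  then have "rep 3 (PrimRec f g) (\<lambda>xs. rec_nat (F (tl xs)) (\<lambda>k y. G (k # y # tl xs)) (hd xs))" by (simp add: numeral_2_eq_2 numeral_3_eq_3)
  then show ?thesis by (rule rep_cong) (auto simp: len3)
qed

fun cn :: "nat \<Rightarrow> recf" where
  "cn 0 = Zero" | "cn (Suc k) = Comp Succ [cn k]"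

lemma rep_cn: "rep n (cn k) (\<lambda>_. k)"
proof (induction k)
  case 0 then show ?case by (simp add: rep_Zero)
next
  case (Suc k)
  show ?case unfolding cn.simps by (rule rep_cong[OF rep_C1[OF rep_Succ Suc]]) simp
qed

definition "addr = PrimRec (Proj 0) (Comp Succ [Proj 1])"
lemma rep_addr: "rep 2 addr (\<lambda>xs. xs ! 0 + xs ! 1)"
proof -
  have "rec_nat b (\<lambda>k y. Suc y) a = a + b" for a b :: nat
    by (induction a) auto
  then show ?thesis unfolding addr_def
  by (intro rep_cong[OF rep_PR1[OF rep_Proj rep_C1[OF rep_Succ rep_Proj]]]) (auto simp: len2)
qed


definition "predr = PrimRec Zero (Proj 0)"
lemma rep_predr: "rep 1 predr (\<lambda>xs. xs ! 0 - 1)"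
proof -
  have "rec_nat 0 (\<lambda>k y. k) a = a - Suc 0" for a :: nat by (cases a) auto
  then show ?thesis unfolding predr_def
  by (intro rep_cong[OF rep_PR0[OF rep_Zero rep_Proj]]) (auto simp: len1)
qed

definition "subr = PrimRec (Proj 0) (Comp predr [Proj 1])"
lemma rep_subr: "rep 2 subr (\<lambda>xs. xs ! 1 - xs ! 0)"
proof -
  have "rec_nat a (\<lambda>k y. y - 1) b = a - b" for a b :: nat
    by (induction b) auto
  then show ?thesis
  unfolding subr_def
  by (intro rep_cong[OF rep_PR1[OF rep_Proj rep_C1[OF rep_predr rep_Proj]]]) (auto simp: len2)
qed

definition "dsub = Comp subr [Proj 1, Proj 0]"
lemma rep_dsub: "rep 2 dsub (\<lambda>xs. xs ! 0 - xs ! 1)"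
  unfolding dsub_def by (rule rep_cong[OF rep_C2[OF rep_subr rep_Proj rep_Proj]]) auto

definition "nsgr = Comp dsub [cn 1, Proj 0]"
lemma rep_nsgr: "rep 1 nsgr (\<lambda>xs. 1 - xs ! 0)"
  unfolding nsgr_def by (rule rep_cong[OF rep_C2[OF rep_dsub rep_cn rep_Proj]]) auto

definition "trir = PrimRec Zero (Comp addr [Comp Succ [Proj 0], Proj 1])"
lemma rep_trir: "rep 1 trir (\<lambda>xs. triangle (xs ! 0))"
proof -
  have "rec_nat 0 (\<lambda>k y. Suc k + y) b = triangle b" for b
    by (induction b) auto
  then show ?thesis
  unfolding trir_def
  by (intro rep_cong[OF rep_PR0[OF rep_Zero rep_C2[OF rep_addr rep_C1[OF rep_Succ rep_Proj] rep_Proj]]])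
     (auto simp: len1)
qed




lemma rep_Mu1: assumes "rep 2 f F" "\<And>a. \<exists>y. F [y, a] = 0"
  shows "rep 1 (Mu f) (\<lambda>xs. LEAST y. F [y, xs ! 0] = 0)"
proof -
  have "rep (Suc 0) (Mu f) (\<lambda>xs. LEAST y. F (y # xs) = 0)"
    by (rule rep_Mu) (use assms in \<open>auto simp: numeral_2_eq_2 len1[simplified]\<close>)
  then have "rep 1 (Mu f) (\<lambda>xs. LEAST y. F (y # xs) = 0)" by simp
  then show ?thesis by (rule rep_cong) (auto simp: len1)
qed

lemma triangle_mono: "a \<le> b \<Longrightarrow> triangle a \<le> triangle b"
  unfolding triangle_def by (intro div_le_mono mult_le_mono) auto

lemma prod_decode_split: "n = triangle (fst (prod_decode n) + snd (prod_decode n)) + fst (prod_decode n)"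
proof -
  obtain x y where p: "prod_decode n = (x, y)" by (cases "prod_decode n")
  have "prod_encode (x, y) = n" using prod_decode_inverse[of n] p by simp
  then show ?thesis using p by (simp add: prod_encode_def)
qed

lemma least_s: "(LEAST s. Suc n - triangle (Suc s) = 0) = fst (prod_decode n) + snd (prod_decode n)"
proof (rule Least_equality)
  let ?x = "fst (prod_decode n)" and ?y = "snd (prod_decode n)"
  have n: "n = triangle (?x + ?y) + ?x" by (rule prod_decode_split)
  show "Suc n - triangle (Suc (?x + ?y)) = 0" by (subst n) simp
  fix s assume "Suc n - triangle (Suc s) = 0"
  then have "n < triangle (Suc s)" by simp
  show "?x + ?y \<le> s"
  proof (rule ccontr)
    assume "\<not> ?x + ?y \<le> s"
    then have "triangle (Suc s) \<le> triangle (?x + ?y)" by (intro triangle_mono) simp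
    with \<open>n < triangle (Suc s)\<close> n show False by simp
  qed
qed

definition "sr = Mu (Comp dsub [Comp Succ [Proj 1], Comp trir [Comp Succ [Proj 0]]])"
lemma rep_sr: "rep 1 sr (\<lambda>xs. fst (prod_decode (xs ! 0)) + snd (prod_decode (xs ! 0)))"
proof -
  have "rep 2 (Comp dsub [Comp Succ [Proj 1], Comp trir [Comp Succ [Proj 0]]])
     (\<lambda>xs. Suc (xs ! 1) - triangle (Suc (xs ! 0)))"
    by (rule rep_cong[OF rep_C2[OF rep_dsub rep_C1[OF rep_Succ rep_Proj]
          rep_C1[OF rep_trir rep_C1[OF rep_Succ rep_Proj]]]]) auto
  then have "rep 1 sr (\<lambda>xs. LEAST y. Suc (xs ! 0) - triangle (Suc y) = 0)"
    unfolding sr_def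
    apply (rule rep_cong[OF rep_Mu1])
    subgoal for a by (rule exI[of _ a]) simp
    by simp
  then show ?thesis by (rule rep_cong) (simp only: least_s)
qed

definition "fstr = Comp dsub [Proj 0, Comp trir [sr]]"
lemma rep_fstr: "rep 1 fstr (\<lambda>xs. fst (prod_decode (xs ! 0)))"
  unfolding fstr_def
  by (rule rep_cong[OF rep_C2[OF rep_dsub rep_Proj rep_C1[OF rep_trir rep_sr]]])
     (auto, metis prod_decode_split add_diff_cancel_left')

definition "sndr = Comp dsub [sr, fstr]"
lemma rep_sndr: "rep 1 sndr (\<lambda>xs. snd (prod_decode (xs ! 0)))"
  unfolding sndr_def
  by (rule rep_cong[OF rep_C2[OF rep_dsub rep_sr rep_fstr]]) auto

definition hdc :: "nat \<Rightarrow> nat" where "hdc m = fst (prod_decode (m - 1))"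
definition tlc :: "nat \<Rightarrow> nat" where "tlc m = snd (prod_decode (m - 1))"

definition "hdr = Comp fstr [predr]"
lemma rep_hdr: "rep 1 hdr (\<lambda>xs. hdc (xs ! 0))"
  unfolding hdr_def hdc_def by (rule rep_cong[OF rep_C1[OF rep_fstr rep_predr]]) auto

definition "tlr = Comp sndr [predr]"
lemma rep_tlr: "rep 1 tlr (\<lambda>xs. tlc (xs ! 0))"
  unfolding tlr_def tlc_def by (rule rep_cong[OF rep_C1[OF rep_sndr rep_predr]]) auto

definition "currec = PrimRec (Proj 0) (Comp tlr [Proj 1])"
lemma rep_currec: "rep 2 currec (\<lambda>xs. (tlc ^^ (xs ! 0)) (xs ! 1))"
proof -
  have "rec_nat m (\<lambda>k y. tlc y) j = (tlc ^^ j) m" for m j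
    by (induction j) auto
  then show ?thesis unfolding currec_def
    by (intro rep_cong[OF rep_PR1[OF rep_Proj rep_C1[OF rep_tlr rep_Proj]]]) (auto simp: len2)
qed

lemma list_decode_nz: "m \<noteq> 0 \<Longrightarrow> list_decode m = hdc m # list_decode (tlc m)"
  by (cases m) (auto simp: hdc_def tlc_def split: prod.split)

lemma tlc0: "tlc 0 = 0"
  by (simp add: tlc_def prod_decode_def prod_decode_aux.simps)

lemma list_decode_tlc: "list_decode (tlc m) = tl (list_decode m)"
  by (cases "m = 0") (auto simp: tlc0 list_decode_nz)

lemma list_decode_cur: "list_decode ((tlc ^^ j) m) = drop j (list_decode m)"
  by (induction j) (auto simp: list_decode_tlc drop_Suc tl_drop)

lemma length_le_encode: "length xs \<le> list_encode xs"
  by (induction xs) (auto simp: le_prod_encode_2 intro: le_trans)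




lemma re_Comp1: "rec_eval (Comp f [g]) xs z \<longleftrightarrow> (\<exists>y. rec_eval g xs y \<and> rec_eval f [y] z)"
  unfolding re_Comp
  by (auto simp: len1)

lemma re_Comp2: "rec_eval (Comp f [g1, g2]) xs z \<longleftrightarrow>
   (\<exists>y1 y2. rec_eval g1 xs y1 \<and> rec_eval g2 xs y2 \<and> rec_eval f [y1, y2] z)"
  unfolding re_Comp
proof safe
  fix ys assume "length ys = length [g1, g2]" "\<forall>i<length [g1, g2]. rec_eval ([g1, g2] ! i) xs (ys ! i)"
    "rec_eval f ys z"
  then obtain a b where ys: "ys = [a, b]" by (auto simp: len2[simplified numeral_2_eq_2])
  have H: "\<forall>i<length [g1, g2]. rec_eval ([g1, g2] ! i) xs (ys ! i)" by fact
  show "\<exists>y1 y2. rec_eval g1 xs y1 \<and> rec_eval g2 xs y2 \<and> rec_eval f [y1, y2] z"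
    using H[rule_format, of 0] H[rule_format, of 1] \<open>rec_eval f ys z\<close> ys by auto
next
  fix y1 y2 assume "rec_eval g1 xs y1" "rec_eval g2 xs y2" "rec_eval f [y1, y2] z"
  then show "\<exists>ys. length ys = length [g1, g2] \<and>
       (\<forall>i<length [g1, g2]. rec_eval ([g1, g2] ! i) xs (ys ! i)) \<and> rec_eval f ys z"
    by (intro exI[of _ "[y1, y2]"]) (auto simp: less_Suc_eq)
qed

lemma re_Comp3: "rec_eval (Comp f [g1, g2, g3]) xs z \<longleftrightarrow>
   (\<exists>y1 y2 y3. rec_eval g1 xs y1 \<and> rec_eval g2 xs y2 \<and> rec_eval g3 xs y3 \<and> rec_eval f [y1, y2, y3] z)"
  unfolding re_Comp
proof safe
  fix ys assume "length ys = length [g1, g2, g3]" "\<forall>i<length [g1, g2, g3]. rec_eval ([g1, g2, g3] ! i) xs (ys ! i)"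
    "rec_eval f ys z"
  then obtain a b c where ys: "ys = [a, b, c]" by (auto simp: len3[simplified numeral_3_eq_3])
  have H: "\<forall>i<length [g1, g2, g3]. rec_eval ([g1, g2, g3] ! i) xs (ys ! i)" by fact
  show "\<exists>y1 y2 y3. rec_eval g1 xs y1 \<and> rec_eval g2 xs y2 \<and> rec_eval g3 xs y3 \<and> rec_eval f [y1, y2, y3] z"
    using H[rule_format, of 0] H[rule_format, of 1] H[rule_format, of 2] \<open>rec_eval f ys z\<close> ys by auto
next
  fix y1 y2 y3 assume "rec_eval g1 xs y1" "rec_eval g2 xs y2" "rec_eval g3 xs y3" "rec_eval f [y1, y2, y3] z"
  then show "\<exists>ys. length ys = length [g1, g2, g3] \<and>
       (\<forall>i<length [g1, g2, g3]. rec_eval ([g1, g2, g3] ! i) xs (ys ! i)) \<and> rec_eval f ys z"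
    by (intro exI[of _ "[y1, y2, y3]"]) (auto simp: less_Suc_eq)
qed

definition badv :: "nat \<Rightarrow> nat \<Rightarrow> nat" where
  "badv r c = 1 - ((1 - c) + (1 - ((1 - hdc c) + (hdc c - r))))"

definition "badr r = Comp dsub [cn 1, Comp addr [Comp nsgr [Proj 0],
   Comp nsgr [Comp addr [Comp nsgr [hdr], Comp dsub [hdr, cn r]]]]]"

lemma rep_badr: "rep 1 (badr r) (\<lambda>xs. badv r (xs ! 0))"
  unfolding badr_def badv_def
  by (rule rep_cong[OF rep_C2[OF rep_dsub rep_cn rep_C2[OF rep_addr rep_C1[OF rep_nsgr rep_Proj]
      rep_C1[OF rep_nsgr rep_C2[OF rep_addr rep_C1[OF rep_nsgr rep_hdr] rep_C2[OF rep_dsub rep_hdr rep_cn]]]]]]) auto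

definition "Sr r = PrimRec Zero (Comp addr [Comp (badr r) [Comp currec [Proj 0, Proj 2]], Proj 1])"

lemma rep_Sr: "rep 2 (Sr r) (\<lambda>xs. \<Sum>j<xs ! 0. badv r ((tlc ^^ j) (xs ! 1)))"
proof -
  have "rec_nat 0 (\<lambda>k y. badv r ((tlc ^^ k) m) + y) a = (\<Sum>j<a. badv r ((tlc ^^ j) m))" for a m
    by (induction a) auto
  then show ?thesis unfolding Sr_def
    by (intro rep_cong[OF rep_PR1[OF rep_Zero rep_C2[OF rep_addr rep_C1[OF rep_badr
          rep_C2[OF rep_currec rep_Proj rep_Proj]] rep_Proj]]]) (auto simp: len2)
qed

definition valid :: "nat \<Rightarrow> nat \<Rightarrow> bool" where
  "valid r m \<longleftrightarrow> set (list_decode m) \<subseteq> {1..r}"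

lemma badv0: "badv r c = 0 \<longleftrightarrow> c = 0 \<or> (1 \<le> hdc c \<and> hdc c \<le> r)"
  unfolding badv_def by auto

lemma list_decode_0_iff: "list_decode c = [] \<longleftrightarrow> c = 0"
  by (metis list_decode.simps(1) list_decode_inverse list_encode.simps(1))

lemma hdc_nth: "c \<noteq> 0 \<Longrightarrow> hdc c = hd (list_decode c)"
  by (simp add: list_decode_nz)

lemma valid_sum: "(1 - (\<Sum>j<m. badv r ((tlc ^^ j) m))) = (if valid r m then 1 else 0)"
proof -
  let ?L = "list_decode m"
  have len: "length ?L \<le> m" by (metis length_le_encode list_decode_inverse)
  have cur: "(tlc ^^ j) m \<noteq> 0 \<longleftrightarrow> j < length ?L" for j
    by (metis list_decode_0_iff list_decode_cur drop_eq_Nil not_le)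
  have hd: "j < length ?L \<Longrightarrow> hdc ((tlc ^^ j) m) = ?L ! j" for j
    using cur[of j] by (simp add: hdc_nth list_decode_cur hd_drop_conv_nth)
  have "(\<Sum>j<m. badv r ((tlc ^^ j) m)) = 0 \<longleftrightarrow> (\<forall>j<m. badv r ((tlc ^^ j) m) = 0)"
    by auto
  also have "\<dots> \<longleftrightarrow> (\<forall>j<length ?L. 1 \<le> ?L ! j \<and> ?L ! j \<le> r)"
  proof safe
    fix j assume A: "\<forall>j<m. badv r ((tlc ^^ j) m) = 0" and j: "j < length ?L"
    then have "badv r ((tlc ^^ j) m) = 0" using len by auto
    then show "1 \<le> ?L ! j" "?L ! j \<le> r" using cur[of j] hd[OF j] j by (auto simp: badv0)
  next
    fix j assume A: "\<forall>j<length ?L. 1 \<le> ?L ! j \<and> ?L ! j \<le> r" and j: "j < m"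
    show "badv r ((tlc ^^ j) m) = 0"
    proof (cases "j < length ?L")
      case True then show ?thesis using A hd[OF True] by (auto simp: badv0)
    next
      case False then show ?thesis using cur[of j] by (auto simp: badv0)
    qed
  qed
  also have "\<dots> \<longleftrightarrow> valid r m"
    unfolding valid_def by (auto simp: in_set_conv_nth subset_iff)
  finally have E: "(\<Sum>j<m. badv r ((tlc ^^ j) m)) = 0 \<longleftrightarrow> valid r m" .
  show ?thesis
  proof (cases "valid r m")
    case True then show ?thesis using E by simp
  next
    case False then have "(\<Sum>j<m. badv r ((tlc ^^ j) m)) \<noteq> 0" using E by blast
    then have z: "1 - (\<Sum>j<m. badv r ((tlc ^^ j) m)) = 0" by arith
    show ?thesis by (simp only: if_not_P[OF False] z)
  qed
qed

definition "validr r = Comp nsgr [Comp (Sr r) [Proj 0, Proj 0]]"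
lemma rep_validr: "rep 1 (validr r) (\<lambda>xs. if valid r (xs ! 0) then 1 else 0)"
proof -
  have "rep 1 (validr r) (\<lambda>xs. 1 - (\<Sum>j<xs ! 0. badv r ((tlc ^^ j) (xs ! 0))))"
    unfolding validr_def
    by (rule rep_cong[OF rep_C1[OF rep_nsgr rep_C2[OF rep_Sr rep_Proj rep_Proj]]]) auto
  then show ?thesis by (rule rep_cong) (simp only: valid_sum)
qed

definition "neqr = Comp nsgr [Comp nsgr [Comp addr [dsub, subr]]]"
lemma rep_neqr: "rep 2 neqr (\<lambda>xs. if xs ! 0 = xs ! 1 then 0 else 1)"
  unfolding neqr_def
  by (rule rep_cong[OF rep_C1[OF rep_nsgr rep_C1[OF rep_nsgr rep_C2[OF rep_addr rep_dsub rep_subr]]]]) auto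




definition "hfun eZ = Comp neqr [Comp eZ [Proj 2], Proj 3]"
definition "gm r eZ = Comp (PrimRec (cn 1) (hfun eZ)) [Comp (validr r) [Proj 0], Proj 0, Proj 1]"

lemma valid_lists: "valid r k \<longleftrightarrow> list_decode k \<in> lists {1..r}"
  by (auto simp: valid_def)

lemma gm_eval:
  assumes eZ: "\<forall>s\<in>lists {1..r}. \<forall>y. rec_eval eZ [str_code s] y \<longleftrightarrow> y = bin_code (Z s)"
  shows "rec_eval (gm r eZ) [k, x] v \<longleftrightarrow>
    v = (if valid r k \<and> bin_code (Z (list_decode k)) = x then 0 else 1)"
proof -
  have V: "rec_eval (Comp (validr r) [Proj 0]) [k, x] y \<longleftrightarrow> y = (if valid r k then 1 else 0)" for y
    using repD[OF rep_C1[OF rep_validr rep_Proj[of 0 2]], of "[k, x]"] by simp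
  have "rec_eval (gm r eZ) [k, x] v \<longleftrightarrow>
      rec_eval (PrimRec (cn 1) (hfun eZ)) [if valid r k then 1 else 0, k, x] v"
    unfolding gm_def re_Comp3 V by simp
  also have "\<dots> \<longleftrightarrow> v = (if valid r k \<and> bin_code (Z (list_decode k)) = x then 0 else 1)"
  proof (cases "valid r k")
    case False
    then show ?thesis using repD[OF rep_cn[of 2 1], of "[k, x]"] by simp
  next
    case True
    have c1: "rec_eval (cn 1) [k, x] y \<longleftrightarrow> y = 1" for y
      using repD[OF rep_cn[of 2 1], of "[k, x]"] by simp
    have ez: "rec_eval eZ [k] y \<longleftrightarrow> y = bin_code (Z (list_decode k))" for y
      using eZ True unfolding valid_lists str_code_def
      by (metis list_decode_inverse)
    have ne: "rec_eval neqr [a, b] v \<longleftrightarrow> v = (if a = b then 0 else 1)" for a b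
      using repD[OF rep_neqr, of "[a, b]"] by simp
    have "rec_eval (PrimRec (cn 1) (hfun eZ)) [1, k, x] v \<longleftrightarrow> rec_eval (hfun eZ) [0, 1, k, x] v"
      using c1 by (simp add: One_nat_def del: One_nat_def[symmetric])
    also have "\<dots> \<longleftrightarrow> v = (if bin_code (Z (list_decode k)) = x then 0 else 1)"
      unfolding hfun_def re_Comp2 re_Comp1 by (simp add: ez ne)
    finally show ?thesis using True by simp
  qed
  finally show ?thesis .
qed

lemma bin_code_eq: "bin_code P = bin_code Q \<longleftrightarrow> P = Q"
proof -
  have "inj (of_bool :: bool \<Rightarrow> nat)" by (auto simp: inj_def)
  then show ?thesis unfolding bin_code_def list_encode_eq by (simp add: inj_map_eq_map)
qed

lemma decompressor_prm:
  assumes inj: "inj_on Z (lists {1..r})"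
    and eZ: "\<forall>s\<in>lists {1..r}. \<forall>y. rec_eval eZ [str_code s] y \<longleftrightarrow> y = bin_code (Z s)"
  shows "partial_recursive_machine
    (\<lambda>P. if P \<in> Z ` lists {1..r} then Some (the_inv_into (lists {1..r}) Z P) else None)"
  unfolding partial_recursive_machine_def
proof (intro exI allI)
  fix P y
  let ?G = "\<lambda>xs. if valid r (xs ! 0) \<and> bin_code (Z (list_decode (xs ! 0))) = xs ! 1 then 0 else (1::nat)"
  have rg: "rep (Suc 1) (gm r eZ) ?G"
    unfolding rep_def by (auto simp: gm_eval[OF eZ] len2[simplified numeral_2_eq_2])
  have M: "rec_eval (Mu (gm r eZ)) [bin_code P] y \<longleftrightarrow>
      (valid r y \<and> Z (list_decode y) = P) \<and> (\<forall>i<y. \<not> (valid r i \<and> Z (list_decode i) = P))"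
    unfolding rep_Mu_iff[OF rg, of "[bin_code P]", simplified] by (simp add: bin_code_eq) blast
  show "rec_eval (Mu (gm r eZ)) [bin_code P] y \<longleftrightarrow>
    (\<exists>s. (if P \<in> Z ` lists {1..r} then Some (the_inv_into (lists {1..r}) Z P) else None) = Some s
        \<and> y = str_code s)"
    unfolding M
  proof
    assume H: "(valid r y \<and> Z (list_decode y) = P) \<and> (\<forall>i<y. \<not> (valid r i \<and> Z (list_decode i) = P))"
    then have v: "valid r y" and z: "Z (list_decode y) = P" by auto
    have l: "list_decode y \<in> lists {1..r}" using v valid_lists by blast
    then show "\<exists>s. (if P \<in> Z ` lists {1..r} then Some (the_inv_into (lists {1..r}) Z P) else None) = Some s
        \<and> y = str_code s"
      using z the_inv_into_f_f[OF inj l] by (auto simp: str_code_def)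
  next
    assume "\<exists>s. (if P \<in> Z ` lists {1..r} then Some (the_inv_into (lists {1..r}) Z P) else None) = Some s
        \<and> y = str_code s"
    then obtain s where h: "(if P \<in> Z ` lists {1..r} then Some (the_inv_into (lists {1..r}) Z P) else None) = Some s"
      and ys: "y = str_code s" by blast
    then obtain t where t: "t \<in> lists {1..r}" "P = Z t" by (auto split: if_splits)
    then have s: "s = t" using h the_inv_into_f_f[OF inj t(1)] by auto
    have 1: "valid r y" using t s ys by (simp add: valid_lists str_code_def)
    have 2: "Z (list_decode y) = P" using t s ys by (simp add: str_code_def)
    have 3: "\<not> (valid r i \<and> Z (list_decode i) = P)" if "i < y" for i
    proof
      assume "valid r i \<and> Z (list_decode i) = P"
      then have "list_decode i = t" using inj t valid_lists by (metis inj_on_eq_iff)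
      then show False using \<open>i < y\<close> s ys by (metis list_decode_inverse less_irrefl str_code_def)
    qed
    show "(valid r y \<and> Z (list_decode y) = P) \<and> (\<forall>i<y. \<not> (valid r i \<and> Z (list_decode i) = P))"
      using 1 2 3 by blast
  qed
qed

lemma AIC_le:
  assumes "C P = Some s" shows "AIC C s \<le> length P"
  unfolding AIC_def by (rule Least_le) (use assms in blast)

lemma AIC_bound:
  assumes "universal_machine C" "recursive_reversible_compression r Z"
  shows "\<exists>c. \<forall>s\<in>lists {1..r}. AIC C s \<le> I_Z Z s + c"
proof -
  from assms(2) obtain eZ where inj: "inj_on Z (lists {1..r})"
    and eZ: "\<forall>s\<in>lists {1..r}. \<forall>y. rec_eval eZ [str_code s] y \<longleftrightarrow> y = bin_code (Z s)"
    unfolding recursive_reversible_compression_def by blast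
  from assms(1) decompressor_prm[OF inj eZ] obtain p where
    p: "\<And>P. C (p @ P) = (if P \<in> Z ` lists {1..r} then Some (the_inv_into (lists {1..r}) Z P) else None)"
    unfolding universal_machine_def by blast
  have "AIC C s \<le> I_Z Z s + length p" if s: "s \<in> lists {1..r}" for s
  proof -
    have "C (p @ Z s) = Some s" using p[of "Z s"] s the_inv_into_f_f[OF inj s] by simp
    then show ?thesis using AIC_le by (fastforce simp: I_Z_def)
  qed
  then show ?thesis by blast
qed




lemma symb_meas:
  assumes T: "T \<in> M \<rightarrow>\<^sub>M M" and A: "\<And>i. i \<in> {1..r} \<Longrightarrow> A i \<in> sets M"
    and disj: "disjoint_family_on A {1..r}" and cov: "(\<Union>i\<in>{1..r}. A i) = space M"
  shows "symb r T A \<in> M \<rightarrow>\<^sub>M seq_space"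
    and "\<And>x j. x \<in> space M \<Longrightarrow> symb r T A x j \<in> {1..r}"
proof -
  have key: "symb r T A x j = i \<longleftrightarrow> i \<in> {1..r} \<and> (T^^j) x \<in> A i" if x: "x \<in> space M" for x j i
  proof -
    have y: "(T^^j) x \<in> space M" using measurable_space[OF measurable_compose_n[OF T] x] .
    then obtain i0 where i0: "i0 \<in> {1..r}" "(T^^j) x \<in> A i0" using cov by blast
    have uniq: "i' = i0" if "i' \<in> {1..r} \<and> (T^^j) x \<in> A i'" for i'
      using disj i0 that unfolding disjoint_family_on_def by blast
    have "symb r T A x j = i0" unfolding symb_def by (rule the_equality) (use i0 uniq in auto)
    then show ?thesis using i0 uniq by blast
  qed
  show "symb r T A x j \<in> {1..r}" if "x \<in> space M" for x j
    using key[OF that, of j "symb r T A x j"] by blast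
  have comp: "(\<lambda>x. symb r T A x j) \<in> M \<rightarrow>\<^sub>M count_space UNIV" for j
    unfolding measurable_count_space_eq2_countable
  proof safe
    fix a :: nat
    have "(\<lambda>x. symb r T A x j) -` {a} \<inter> space M = (if a \<in> {1..r} then (T^^j) -` A a \<inter> space M else {})"
      using key by auto
    also have "\<dots> \<in> sets M" using A measurable_sets[OF measurable_compose_n[OF T]] by auto
    finally show "(\<lambda>x. symb r T A x j) -` {a} \<inter> space M \<in> sets M" .
  qed auto
  have "(\<lambda>x j. symb r T A x j) \<in> M \<rightarrow>\<^sub>M seq_space"
    unfolding seq_space_def by (rule measurable_PiM_single'[OF comp]) auto
  then show "symb r T A \<in> M \<rightarrow>\<^sub>M seq_space" by simp
qed

lemma map_upt_eq: "map \<omega> [0..<n] = l \<longleftrightarrow> length l = n \<and> (\<forall>i<n. \<omega> i = l ! i)"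
proof
  assume "map \<omega> [0..<n] = l"
  then show "length l = n \<and> (\<forall>i<n. \<omega> i = l ! i)" by auto
next
  assume "length l = n \<and> (\<forall>i<n. \<omega> i = l ! i)"
  then show "map \<omega> [0..<n] = l" by (intro nth_equalityI) auto
qed

lemma prefix_meas: "(\<lambda>\<omega>. prefix_str \<omega> n) \<in> seq_space \<rightarrow>\<^sub>M count_space UNIV"
  unfolding measurable_count_space_eq2_countable
proof safe
  fix l :: "nat list"
  have "(\<lambda>\<omega>. prefix_str \<omega> n) -` {l} \<inter> space seq_space =
      {\<omega> \<in> space seq_space. length l = n \<and> (\<forall>i<n. \<omega> i = l ! i)}"
    by (rule set_eqI) (simp add: prefix_str_def map_upt_eq, blast)
  also have "\<dots> \<in> sets seq_space" unfolding seq_space_def by measurable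
  finally show "(\<lambda>\<omega>. prefix_str \<omega> n) -` {l} \<inter> space seq_space \<in> sets seq_space" .
qed auto

lemma prefix_fun_meas: "(\<lambda>\<omega>. g (prefix_str \<omega> n)) \<in> borel_measurable (mu_alpha M r T A)"
  unfolding mu_alpha_def measurable_distr_eq1
  by (rule measurable_compose[OF prefix_meas]) simp

lemma prefix_lists: "(\<forall>j. \<omega> j \<in> {1..r}) \<Longrightarrow> prefix_str \<omega> n \<in> lists {1..r}"
  by (auto simp: prefix_str_def)

lemma const_lim: "p > 0 \<Longrightarrow> ((\<lambda>n. ennreal (c / real n powr p)) \<longlongrightarrow> 0) sequentially"
proof -
  assume p: "p > 0"
  have "((\<lambda>n. real n powr (- p)) \<longlongrightarrow> 0) sequentially"
    using p by (intro tendsto_neg_powr filterlim_real_sequentially) simp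
  then have "((\<lambda>n. c * real n powr (- p)) \<longlongrightarrow> c * 0) sequentially"
    by (intro tendsto_mult tendsto_const)
  then have "((\<lambda>n. c / real n powr p) \<longlongrightarrow> 0) sequentially"
    by (simp add: powr_minus divide_inverse)
  then show ?thesis using tendsto_ennrealI by fastforce
qed

lemma entropy_mono:
  assumes prob: "prob_space M" and meas: "symb r T A \<in> M \<rightarrow>\<^sub>M seq_space"
    and valid: "\<And>x j. x \<in> space M \<Longrightarrow> symb r T A x j \<in> {1..r}"
    and bound: "\<And>s. s \<in> lists {1..r} \<Longrightarrow> I1 s \<le> I2 s + c" and p: "p > 0"
    and z: "q_entropy M r T A I2 p = 0"
  shows "q_entropy M r T A I1 p = 0"
proof -
  define N where "N = mu_alpha M r T A"
  interpret N: prob_space N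
    unfolding N_def mu_alpha_def by (rule prob_space.prob_space_distr[OF prob meas])
  have AE: "AE \<omega> in N. \<forall>j. \<omega> j \<in> {1..r}"
    unfolding N_def mu_alpha_def
  proof (subst AE_distr_iff[OF meas])
    have c: "(\<lambda>x. x j) \<in> seq_space \<rightarrow>\<^sub>M count_space UNIV" for j
      unfolding seq_space_def by (rule measurable_component_singleton) simp
    have "{x \<in> space seq_space. \<forall>j. x j \<in> {1..r}} = (\<Inter>j. (\<lambda>x. x j) -` {1..r} \<inter> space seq_space)"
      by auto
    also have "\<dots> \<in> sets seq_space"
      using measurable_sets[OF c] by (intro sets.countable_INT) auto
    finally show "{x \<in> space seq_space. \<forall>j. x j \<in> {1..r}} \<in> sets seq_space" .
    show "AE x in M. \<forall>j. symb r T A x j \<in> {1..r}" using valid by (intro AE_I2) blast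
  qed
  define F1 where "F1 n = (\<integral>\<^sup>+ \<omega>. ennreal (real (I1 (prefix_str \<omega> n)) / real n powr p) \<partial>N)" for n
  define F2 where "F2 n = (\<integral>\<^sup>+ \<omega>. ennreal (real (I2 (prefix_str \<omega> n)) / real n powr p) \<partial>N)" for n
  define K where "K n = ennreal (real c / real n powr p)" for n
  have le: "F1 n \<le> F2 n + K n" for n
  proof -
    have "F1 n \<le> (\<integral>\<^sup>+ \<omega>. ennreal (real (I2 (prefix_str \<omega> n)) / real n powr p) + K n \<partial>N)"
      unfolding F1_def
    proof (rule nn_integral_mono_AE)
      show "AE \<omega> in N. ennreal (real (I1 (prefix_str \<omega> n)) / real n powr p)
          \<le> ennreal (real (I2 (prefix_str \<omega> n)) / real n powr p) + K n"
        using AE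
      proof eventually_elim
        case (elim \<omega>)
        have b: "real (I1 (prefix_str \<omega> n)) \<le> real (I2 (prefix_str \<omega> n)) + real c"
          using bound[OF prefix_lists[OF elim], of n] by linarith
        have "real (I1 (prefix_str \<omega> n)) / real n powr p \<le>
            real (I2 (prefix_str \<omega> n)) / real n powr p + real c / real n powr p"
          using divide_right_mono[OF b, of "real n powr p"] by (simp add: add_divide_distrib)
        then have "ennreal (real (I1 (prefix_str \<omega> n)) / real n powr p) \<le>
            ennreal (real (I2 (prefix_str \<omega> n)) / real n powr p + real c / real n powr p)"
          by (rule ennreal_leI)
        then show ?case unfolding K_def by (simp add: ennreal_plus)
      qed
    qed
    also have "\<dots> = F2 n + K n"
      unfolding F2_def
      by (subst nn_integral_add) (auto simp: N_def prefix_fun_meas[where g="\<lambda>s. real (I2 s) / real n powr p"] N.emeasure_space_1[unfolded N_def])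
    finally show ?thesis .
  qed
  have F2lim: "F2 \<longlonglongrightarrow> 0"
  proof -
    have ls: "limsup F2 = 0" using z unfolding q_entropy_def F2_def N_def .
    have "liminf F2 \<le> limsup F2" by (rule Liminf_le_Limsup) simp
    then have "liminf F2 = 0" using ls by simp
    then show ?thesis using ls by (simp add: tendsto_iff_Liminf_eq_Limsup)
  qed
  have Klim: "K \<longlonglongrightarrow> 0" unfolding K_def using const_lim[OF p] .
  have "(\<lambda>n. F2 n + K n) \<longlonglongrightarrow> 0 + 0" by (intro tendsto_add F2lim Klim)
  then have "limsup (\<lambda>n. F2 n + K n) = 0" by (simp add: lim_imp_Limsup)
  moreover have "limsup F1 \<le> limsup (\<lambda>n. F2 n + K n)" by (rule Limsup_mono) (simp add: le)
  ultimately have "limsup F1 = 0" by simp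
  then show ?thesis unfolding q_entropy_def F1_def N_def .
qed



theorem corollary5p7:
  fixes M :: "'a measure" and T :: "'a \<Rightarrow> 'a" and A :: "nat \<Rightarrow> 'a set" and r :: nat
    and C :: "bool list \<Rightarrow> nat list option" and Z :: "nat list \<Rightarrow> bool list"
  assumes "prob_space M"
    and "T \<in> M \<rightarrow>\<^sub>M M"
    and "r \<ge> 1"
    and "\<And>i. i \<in> {1..r} \<Longrightarrow> A i \<in> sets M"
    and "disjoint_family_on A {1..r}"
    and "(\<Union>i\<in>{1..r}. A i) = space M"
    and "universal_machine C"
    and "recursive_reversible_compression r Z"
  shows "chaos_index M r T A (I_Z Z) \<ge> chaos_index M r T A (AIC C)"
proof -
  obtain c where c: "\<forall>s\<in>lists {1..r}. AIC C s \<le> I_Z Z s + c"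
    using AIC_bound[OF assms(7,8)] by blast
  note sm = symb_meas[OF assms(2,4,5,6)]
  have sub: "{p. p > 0 \<and> q_entropy M r T A (I_Z Z) p = 0} \<subseteq> {p. p > 0 \<and> q_entropy M r T A (AIC C) p = 0}"
    using entropy_mono[OF assms(1) sm, of "AIC C" "I_Z Z" c] c by blast
  show ?thesis unfolding chaos_index_def by (intro Inf_superset_mono image_mono sub)
qed

end
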